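(* There exist a probability space $(\Omega,\mathcal A,\mu)$ with an ergodic bimeasurable invertible measure-preserving map $T$, a function $f\in L^2(\mu)$, and a filtration $(\mathcal F_j)_{j\in\mathbb Z}$ (increasing, with $\mathcal F_j=T^{-j}\mathcal F_0$) such that: (i) $(f\circ T^i)$ is not regular w.r.t. its natural filtration $(\mathcal G_i)$; (ii) $(f\circ T^i)$ has no martingale approximation w.r.t. $(\mathcal G_i)$; (iii) $(f\circ T^i)$ has a martingale approximation w.r.t. $(\mathcal F_i)$.
   Context: $S_n(g)=\sum_{i=0}^{n-1}g\circ T^i$. The natural filtration is $\mathcal G_j=\sigma\{f\circ T^i: i\le j\}$. For a filtration $(\mathcal F_i)$, $\mathcal F_{-\infty}=\bigcap_i\mathcal F_i$ and $\mathcal F_\infty=\sigma(\bigcup_i\mathcal F_i)$. The process $(f\circ T^i)$ is regular w.r.t. $(\mathcal F_i)$ if $f$ is $\mathcal F_\infty$-measurable and $E(f\mid\mathcal F_{-\infty})=0$. It has a martingale approximation w.r.t. $(\mathcal F_i)$ if there exists $m\in L^2(\mathcal F_0)\ominus L^2(\mathcal F_{-1})$ (the orthogonal complement of $L^2(\mathcal F_{-1})$ in $L^2(\mathcal F_0)$) with $n^{-1/2}\|S_n(f-m)\|_2\to0$. *)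

theory Defs
  imports "HOL-Probability.Probability"
begin

definition Tpow :: "'a set \<Rightarrow> ('a \<Rightarrow> 'a) \<Rightarrow> int \<Rightarrow> 'a \<Rightarrow> 'a" where
  "Tpow S T j = (if 0 \<le> j then T ^^ nat j else inv_into S T ^^ nat (- j))"

definition invertible_mpt :: "'a measure \<Rightarrow> ('a \<Rightarrow> 'a) \<Rightarrow> bool" where
  "invertible_mpt M T \<longleftrightarrow>
     T \<in> M \<rightarrow>\<^sub>M M \<and> bij_betw T (space M) (space M) \<and>
     inv_into (space M) T \<in> M \<rightarrow>\<^sub>M M \<and>
     (\<forall>A\<in>sets M. emeasure M (T -` A \<inter> space M) = emeasure M A)"

definition ergodic :: "'a measure \<Rightarrow> ('a \<Rightarrow> 'a) \<Rightarrow> bool" where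
  "ergodic M T \<longleftrightarrow>
     (\<forall>A\<in>sets M. T -` A \<inter> space M = A \<longrightarrow> measure M A = 0 \<or> measure M A = 1)"

definition L2 :: "'a measure \<Rightarrow> 'a measure \<Rightarrow> ('a \<Rightarrow> real) set" where
  "L2 M N = {g. g \<in> borel_measurable N \<and> integrable M (\<lambda>x. (g x)\<^sup>2)}"

definition L2norm :: "'a measure \<Rightarrow> ('a \<Rightarrow> real) \<Rightarrow> real" where
  "L2norm M g = sqrt (\<integral>x. (g x)\<^sup>2 \<partial>M)"

definition Ssum :: "('a \<Rightarrow> 'a) \<Rightarrow> ('a \<Rightarrow> real) \<Rightarrow> nat \<Rightarrow> 'a \<Rightarrow> real" where
  "Ssum T g n = (\<lambda>x. \<Sum>i<n. g ((T ^^ i) x))"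

definition is_filtration :: "'a measure \<Rightarrow> (int \<Rightarrow> 'a measure) \<Rightarrow> bool" where
  "is_filtration M F \<longleftrightarrow>
     (\<forall>j. subalgebra M (F j)) \<and> (\<forall>i j. i \<le> j \<longrightarrow> sets (F i) \<subseteq> sets (F j))"

definition F_minf :: "'a measure \<Rightarrow> (int \<Rightarrow> 'a measure) \<Rightarrow> 'a measure" where
  "F_minf M F = sigma (space M) (\<Inter>j. sets (F j))"

definition F_inf :: "'a measure \<Rightarrow> (int \<Rightarrow> 'a measure) \<Rightarrow> 'a measure" where
  "F_inf M F = sigma (space M) (\<Union>j. sets (F j))"

definition natural_filtration :: "'a measure \<Rightarrow> ('a \<Rightarrow> 'a) \<Rightarrow> ('a \<Rightarrow> real) \<Rightarrow> int \<Rightarrow> 'a measure" where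
  "natural_filtration M T f j = sigma (space M)
     {(\<lambda>x. f (Tpow (space M) T i x)) -` B \<inter> space M | i B. i \<le> j \<and> B \<in> sets borel}"

definition regular :: "'a measure \<Rightarrow> ('a \<Rightarrow> real) \<Rightarrow> (int \<Rightarrow> 'a measure) \<Rightarrow> bool" where
  "regular M f F \<longleftrightarrow>
     f \<in> borel_measurable (F_inf M F) \<and> (AE x in M. real_cond_exp M (F_minf M F) f x = 0)"

definition martingale_approx :: "'a measure \<Rightarrow> ('a \<Rightarrow> 'a) \<Rightarrow> ('a \<Rightarrow> real) \<Rightarrow> (int \<Rightarrow> 'a measure) \<Rightarrow> bool" where
  "martingale_approx M T f F \<longleftrightarrow>
     (\<exists>m. m \<in> L2 M (F 0) \<and>
          (\<forall>g\<in>L2 M (F (-1)). (\<integral>x. m x * g x \<partial>M) = 0) \<and>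
          (\<lambda>n. L2norm M (Ssum T (\<lambda>x. f x - m x) n) / sqrt (real n)) \<longlonglongrightarrow> 0)"

end

theory Submission
  imports Defs
begin


definition M0 :: "real measure" where "M0 = uniform_count_measure {0,1}"
definition BM :: "(int \<Rightarrow> real) measure" where "BM = PiM UNIV (\<lambda>_. M0)"
definition shift :: "int \<Rightarrow> (int \<Rightarrow> real) \<Rightarrow> (int \<Rightarrow> real)" where "shift j \<omega> = (\<lambda>k. \<omega> (k + j))"
definition cgen :: "int set \<Rightarrow> (int \<Rightarrow> real) set set" where
  "cgen I = (\<Union>i\<in>I. {(\<lambda>\<omega>. \<omega> i) -` A \<inter> space BM | A. A \<in> sets M0})"
definition CS :: "int set \<Rightarrow> (int \<Rightarrow> real) set set" where
  "CS I = sigma_sets (space BM) (cgen I)"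

lemma space_M0: "space M0 = {0,1}" and sets_M0: "sets M0 = Pow {0,1}"
  by (auto simp: M0_def space_uniform_count_measure sets_uniform_count_measure)

lemma prob_M0: "prob_space M0"
  unfolding M0_def by (rule prob_space_uniform_count_measure) auto

lemma space_BM: "space BM = {\<omega>. \<forall>k. \<omega> k \<in> {0,1}}"
  by (auto simp: BM_def space_PiM PiE_UNIV_domain space_M0)

lemma prob_BM: "prob_space BM"
  unfolding BM_def by (rule prob_space_PiM) (rule prob_M0)

lemma sets_BM: "sets BM = CS UNIV"
proof -
  have "sets BM = sigma_sets (space BM) {{f\<in>space BM. f i \<in> A} | i A. i \<in> (UNIV::int set) \<and> A \<in> sets M0}"
    unfolding BM_def by (subst sets_PiM_single) (simp add: space_PiM)
  also have "{{f\<in>space BM. f i \<in> A} | i A. i \<in> (UNIV::int set) \<and> A \<in> sets M0} = cgen UNIV"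
    unfolding cgen_def by blast
  finally show ?thesis unfolding CS_def .
qed

lemma coord_meas[measurable]: "(\<lambda>\<omega>. \<omega> i) \<in> BM \<rightarrow>\<^sub>M M0"
  unfolding BM_def by (rule measurable_component_singleton) simp

lemma M0_borel: "(g::real\<Rightarrow>real) \<in> borel_measurable M0"
  unfolding M0_def by (subst measurable_cong_sets[OF sets_uniform_count_measure_count_space refl]) simp

lemma coord_borel[measurable]: "(\<lambda>\<omega>. (g::real\<Rightarrow>real) (\<omega> i)) \<in> borel_measurable BM"
  using measurable_compose[OF coord_meas[of i] M0_borel[of g]] by simp

lemma shift_meas: "shift j \<in> BM \<rightarrow>\<^sub>M BM"
proof -
  have "(\<lambda>\<omega> k. \<omega> (k + j)) \<in> BM \<rightarrow>\<^sub>M PiM UNIV (\<lambda>_. M0)"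
    by (rule measurable_PiM_single') (auto simp: space_BM space_PiM PiE_UNIV_domain space_M0)
  then show ?thesis by (simp add: shift_def[abs_def] BM_def[symmetric])
qed

lemma shift_space: "\<omega> \<in> space BM \<Longrightarrow> shift j \<omega> \<in> space BM"
  by (auto simp: space_BM shift_def)

lemma shift_add: "shift i (shift j \<omega>) = shift (i + j) \<omega>"
  by (auto simp: shift_def algebra_simps)


lemma shift_0[simp]: "shift 0 \<omega> = \<omega>"
  by (simp add: shift_def)

lemma distr_shift: "distr BM BM (shift j) = BM"
proof -
  have "distr (PiM UNIV (\<lambda>_. M0)) (PiM UNIV (\<lambda>i. M0)) (\<lambda>\<omega>. \<lambda>n\<in>UNIV. \<omega> (n + j)) = PiM UNIV (\<lambda>i. M0)"
    by (rule distr_PiM_reindex) (auto simp: prob_M0 inj_on_def)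
  moreover have "(\<lambda>\<omega>. \<lambda>n\<in>UNIV. \<omega> (n + j)) = shift j"
    by (auto simp: shift_def fun_eq_iff)
  ultimately show ?thesis by (simp add: BM_def)
qed

lemma emeasure_shift: "A \<in> sets BM \<Longrightarrow> emeasure BM (shift j -` A \<inter> space BM) = emeasure BM A"
  using emeasure_distr[OF shift_meas, of A j] by (simp add: distr_shift)

lemma measure_shift: "A \<in> sets BM \<Longrightarrow> measure BM (shift j -` A \<inter> space BM) = measure BM A"
  by (simp add: measure_def emeasure_shift)

lemma inv_shift: "\<omega> \<in> space BM \<Longrightarrow> inv_into (space BM) (shift 1) \<omega> = shift (-1) \<omega>"
proof (rule inv_into_f_eq)
  show "inj_on (shift 1) (space BM)"
    by (rule inj_onI) (metis shift_add shift_0 add.commute add.right_inverse)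
qed (auto simp: shift_space shift_add)

lemma bij_shift: "bij_betw (shift 1) (space BM) (space BM)"
proof (rule bij_betw_byWitness[where f'="shift (-1)"])
qed (auto simp: shift_space shift_add)

lemma Tpow_shift: assumes w: "\<omega> \<in> space BM" shows "Tpow (space BM) (shift 1) j \<omega> = shift j \<omega>"
proof (cases "0 \<le> j")
  case True
  have "\<omega> \<in> space BM \<Longrightarrow> (shift 1 ^^ n) \<omega> = shift (int n) \<omega>" for n
    by (induction n arbitrary: \<omega>) (auto simp: shift_add add.commute)
  then show ?thesis using True w by (simp add: Tpow_def)
next
  case False
  have "\<omega> \<in> space BM \<Longrightarrow> (inv_into (space BM) (shift 1) ^^ n) \<omega> = shift (- int n) \<omega> \<and> shift (- int n) \<omega> \<in> space BM" for n
  proof (induction n arbitrary: \<omega>)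
    case (Suc n)
    then show ?case by (auto simp: shift_add inv_shift shift_space algebra_simps)
  qed simp
  then show ?thesis using False w by (simp add: Tpow_def)
qed

lemma invertible: "invertible_mpt BM (shift 1)"
  unfolding invertible_mpt_def
proof (intro conjI ballI)
  show "inv_into (space BM) (shift 1) \<in> BM \<rightarrow>\<^sub>M BM"
    using shift_meas[of "-1"] by (rule measurable_cong[THEN iffD1, rotated]) (simp add: inv_shift)
qed (auto simp: shift_meas bij_shift emeasure_shift)

interpretation P: prob_space BM by (rule prob_BM)

lemma cgen_sub: "cgen I \<subseteq> sets BM"
  unfolding cgen_def using coord_meas by (auto simp: measurable_def)

lemma CS_sub: "CS I \<subseteq> sets BM"
  unfolding CS_def by (rule sets.sigma_sets_subset[OF cgen_sub])

lemma CS_mono: "I \<subseteq> J \<Longrightarrow> CS I \<subseteq> CS J"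
  unfolding CS_def cgen_def by (rule sigma_sets_mono') auto

lemma indep_coords: "P.indep_vars (\<lambda>_. M0) (\<lambda>i \<omega>. \<omega> i) UNIV"
proof (subst P.indep_vars_iff_distr_eq_PiM)
  show "distr BM (Pi\<^sub>M UNIV (\<lambda>i. M0)) (\<lambda>x. \<lambda>i\<in>UNIV. x i) = Pi\<^sub>M UNIV (\<lambda>i. distr BM M0 (\<lambda>\<omega>. \<omega> i))"
  proof -
    have "distr BM M0 (\<lambda>\<omega>. \<omega> i) = M0" for i
      unfolding BM_def by (rule distr_PiM_component) (auto simp: prob_M0)
    moreover have "distr BM (Pi\<^sub>M UNIV (\<lambda>i. M0)) (\<lambda>x. \<lambda>i\<in>UNIV. x i) = BM"
      by (simp add: BM_def[symmetric] distr_id2 restrict_UNIV)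
    ultimately show ?thesis by (simp add: BM_def)
  qed
qed auto

lemma indep_CS: assumes "I \<inter> J = {}" shows "P.indep_set (CS I) (CS J)"
proof -
  let ?E = "\<lambda>i. {(\<lambda>\<omega>. \<omega> i) -` A \<inter> space BM | A. A \<in> sets M0}"
  have "P.indep_sets ?E UNIV"
    using indep_coords unfolding P.indep_vars_def2 by simp
  then have ind: "P.indep_sets ?E (\<Union>b\<in>UNIV. case_bool I J b)"
    by (rule P.indep_sets_mono_index[rotated]) auto
  have "P.indep_sets (\<lambda>b. sigma_sets (space BM) (\<Union>i\<in>case_bool I J b. ?E i)) UNIV"
  proof (rule P.indep_sets_collect_sigma[OF ind])
    show "Int_stable (?E i)" for i
      apply (auto simp: Int_stable_def)
      apply (rule_tac x="A \<inter> Aa" in exI)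
      apply (auto simp: sets_M0)
      done
    show "disjoint_family_on (case_bool I J) UNIV"
      using assms by (auto simp: disjoint_family_on_def split: bool.split)
  qed
  then show ?thesis
    unfolding P.indep_set_def
    by (rule P.indep_sets_cong[THEN iffD1, rotated -1]) (auto simp: CS_def cgen_def split: bool.split)
qed



lemma cgen_shift: "{shift j -` A \<inter> space BM | A. A \<in> cgen I} = cgen ((\<lambda>i. i + j) ` I)"
proof -
  have *: "shift j -` ((\<lambda>\<omega>. \<omega> i) -` B \<inter> space BM) \<inter> space BM = (\<lambda>\<omega>. \<omega> (i + j)) -` B \<inter> space BM" for i B
    using shift_space[of _ j] by (auto simp: shift_def)
  show ?thesis
  proof (intro set_eqI iffI)
    fix X assume "X \<in> {shift j -` A \<inter> space BM | A. A \<in> cgen I}"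
    then obtain i B where "i \<in> I" "B \<in> sets M0" "X = shift j -` ((\<lambda>\<omega>. \<omega> i) -` B \<inter> space BM) \<inter> space BM"
      unfolding cgen_def by blast
    then show "X \<in> cgen ((\<lambda>i. i + j) ` I)" unfolding cgen_def * by blast
  next
    fix X assume "X \<in> cgen ((\<lambda>i. i + j) ` I)"
    then obtain i B where "i \<in> I" "B \<in> sets M0" "X = (\<lambda>\<omega>. \<omega> (i + j)) -` B \<inter> space BM"
      unfolding cgen_def by blast
    then show "X \<in> {shift j -` A \<inter> space BM | A. A \<in> cgen I}" unfolding cgen_def *[symmetric] by blast
  qed
qed

lemma CS_shift: "{shift j -` A \<inter> space BM | A. A \<in> CS I} = CS ((\<lambda>i. i + j) ` I)"
proof -
  have "shift j \<in> space BM \<rightarrow> space BM" using shift_space by auto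
  then show ?thesis
    unfolding CS_def by (subst sigma_sets_vimage_commute) (auto simp: cgen_shift)
qed

lemma CS_shift_mem: "A \<in> CS I \<Longrightarrow> shift j -` A \<inter> space BM \<in> CS ((\<lambda>i. i + j) ` I)"
  using CS_shift[of j I] by blast

lemma approx_sets:
  fixes M :: "'a measure"
  assumes fm: "finite_measure M" and alg: "algebra (space M) G" and S: "sets M = sigma_sets (space M) G"
  and A: "A \<in> sets M"
  shows "\<forall>e>0. \<exists>B\<in>G. measure M ((A - B) \<union> (B - A)) < e"
proof -
  interpret finite_measure M by fact
  interpret G: algebra "space M" G by fact
  have GM: "G \<subseteq> sets M" using S by auto
  have IS: "Int_stable G" by (auto simp: Int_stable_def)
  have CL: "G \<subseteq> Pow (space M)" using G.space_closed by auto
  have "A \<in> sigma_sets (space M) G" using A S by simp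
  from IS CL this show ?thesis
  proof (induct rule: sigma_sets_induct_disjoint)
    case (basic A) then show ?case by (intro allI impI bexI[of _ A]) auto
  next
    case empty then show ?case by (intro allI impI bexI[of _ "{}"]) auto
  next
    case (compl A)
    have Asp: "A \<subseteq> space M" using compl(1) sigma_sets_into_sp[OF G.space_closed] by blast
    show ?case
    proof (intro allI impI)
      fix e :: real assume "e > 0"
      then obtain B where B: "B \<in> G" "measure M ((A - B) \<union> (B - A)) < e" using compl(2) by blast
      have "B \<subseteq> space M" using B(1) G.space_closed by auto
      then have "((space M - A) - (space M - B)) \<union> ((space M - B) - (space M - A)) = (A - B) \<union> (B - A)"
        using Asp by auto
      then show "\<exists>B\<in>G. measure M ((space M - A - B) \<union> (B - (space M - A))) < e"
        using B by (intro bexI[of _ "space M - B"]) auto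
    qed
  next
    case (union A)
    have AM: "A i \<in> sets M" for i using union(2) S by auto
    show ?case
    proof (intro allI impI)
      fix e :: real assume e: "e > 0"
      define tl where "tl K = (\<Union>i\<in>{K..}. A i)" for K
      have tlM: "tl K \<in> sets M" for K unfolding tl_def using AM by auto
      have "decseq tl" unfolding tl_def decseq_def by (auto intro: order_trans)
      moreover have "(\<Inter>K. tl K) = {}"
      proof -
        { fix x assume x: "\<forall>K. x \<in> tl K"
          then obtain i where i: "x \<in> A i" by (auto simp: tl_def)
          from x obtain j where "j \<in> {Suc i..}" "x \<in> A j" by (auto simp: tl_def)
          then have "i \<noteq> j" "x \<in> A j" by auto
          with i union(1) have False unfolding disjoint_family_on_def by blast }
        then show ?thesis by auto
      qed
      ultimately have lim: "(\<lambda>K. measure M (tl K)) \<longlonglongrightarrow> 0"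
        using finite_Lim_measure_decseq[of tl] tlM by auto
      have "eventually (\<lambda>K. measure M (tl K) < e/2) sequentially"
        by (rule order_tendstoD(2)[OF lim]) (use e in simp)
      then obtain K where K: "measure M (tl K) < e / 2"
        by (auto simp: eventually_sequentially)
      define d where "d = e / (2 * (real K + 1))"
      have d: "d > 0" using e by (simp add: d_def)
      have "\<forall>i. \<exists>B. B \<in> G \<and> measure M ((A i - B) \<union> (B - A i)) < d"
        using union(3) d by blast
      then obtain B where B: "\<And>i. B i \<in> G" "\<And>i. measure M ((A i - B i) \<union> (B i - A i)) < d"
        by metis
      have BM: "B i \<in> sets M" for i using B(1) GM by auto
      define BB where "BB = (\<Union>i\<in>{..<K}. B i)"
      have BB: "BB \<in> G" unfolding BB_def using B(1) by (intro G.finite_UN) auto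
      have sub: "((\<Union>i. A i) - BB) \<union> (BB - (\<Union>i. A i)) \<subseteq> (\<Union>i\<in>{..<K}. (A i - B i) \<union> (B i - A i)) \<union> tl K"
        unfolding BB_def tl_def by auto (metis atLeast_iff lessThan_iff not_le)
      have "measure M (((\<Union>i. A i) - BB) \<union> (BB - (\<Union>i. A i))) \<le> measure M ((\<Union>i\<in>{..<K}. (A i - B i) \<union> (B i - A i)) \<union> tl K)"
        by (rule finite_measure_mono[OF sub]) (use AM BM tlM in auto)
      also have "\<dots> \<le> measure M (\<Union>i\<in>{..<K}. (A i - B i) \<union> (B i - A i)) + measure M (tl K)"
        by (rule measure_Un_le) (use AM BM tlM in auto)
      also have "\<dots> \<le> (\<Sum>i\<in>{..<K}. measure M ((A i - B i) \<union> (B i - A i))) + measure M (tl K)"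
        using measure_UNION_le[of "{..<K}" "\<lambda>i. (A i - B i) \<union> (B i - A i)" M] AM BM by auto
      also have "\<dots> \<le> (\<Sum>i\<in>{..<K}. d) + measure M (tl K)"
        using B(2) by (intro add_mono sum_mono) (auto intro: less_imp_le)
      also have "\<dots> < real K * d + e / 2" using K by simp
      also have "\<dots> \<le> e"
      proof -
        have "real K * d = e * real K / (2 * (real K + 1))" by (simp add: d_def)
        also have "\<dots> \<le> e / 2" using e by (simp add: field_simps)
        finally show ?thesis by simp
      qed
      finally show "\<exists>B\<in>G. measure M ((\<Union>i. A i) - B \<union> (B - (\<Union>i. A i))) < e"
        using BB by blast
    qed
  qed
qed


lemma CS_sigma: "sigma_algebra (space BM) (CS I)"
  unfolding CS_def by (rule sigma_algebra_sigma_sets) (use cgen_sub sets.sets_into_space[of _ BM] in blast)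

definition GG :: "(int \<Rightarrow> real) set set" where "GG = (\<Union>N::nat. CS {- int N..int N})"

lemma GG_alg: "algebra (space BM) GG"
proof -
  have up: "a \<in> GG \<Longrightarrow> \<exists>N. \<forall>N'\<ge>N. a \<in> CS {- int N'..int N'}" for a
    unfolding GG_def
    apply clarify
    subgoal for N by (rule exI[of _ N]) (auto intro: CS_mono[THEN subsetD, of "{-int N..int N}"])
    done
  show ?thesis unfolding algebra_iff_Un
  proof (intro conjI ballI)
    show "GG \<subseteq> Pow (space BM)" unfolding GG_def using CS_sub sets.sets_into_space[of _ BM] by blast
    have "{} \<in> CS {- int 0..int 0}" by (simp add: CS_def sigma_sets.Empty)
    then show "{} \<in> GG" unfolding GG_def by blast
    fix a assume "a \<in> GG"
    then obtain N where "a \<in> CS {- int N..int N}" unfolding GG_def by auto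
    then have "space BM - a \<in> CS {- int N..int N}" unfolding CS_def by (rule sigma_sets.Compl)
    then show "space BM - a \<in> GG" unfolding GG_def by blast
    fix b assume "b \<in> GG"
    obtain N1 where "\<forall>N'\<ge>N1. a \<in> CS {- int N'..int N'}" using up \<open>a \<in> GG\<close> by blast
    moreover obtain N2 where "\<forall>N'\<ge>N2. b \<in> CS {- int N'..int N'}" using up \<open>b \<in> GG\<close> by blast
    ultimately have "a \<in> CS {- int (max N1 N2)..int (max N1 N2)}" "b \<in> CS {- int (max N1 N2)..int (max N1 N2)}" by auto
    then have "a \<union> b \<in> CS {- int (max N1 N2)..int (max N1 N2)}" unfolding CS_def by (rule sigma_sets_Un)
    then show "a \<union> b \<in> GG" unfolding GG_def by blast
  qed
qed

lemma sets_BM_GG: "sets BM = sigma_sets (space BM) GG"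
  unfolding sets_BM CS_def[of UNIV]
proof (rule sigma_sets_eqI)
  fix a assume "a \<in> cgen UNIV"
  then obtain i where "a \<in> cgen {i}" unfolding cgen_def by auto
  moreover have "cgen {i} \<subseteq> CS {- int (nat \<bar>i\<bar>)..int (nat \<bar>i\<bar>)}"
  proof -
    have "{i} \<subseteq> {- int (nat \<bar>i\<bar>)..int (nat \<bar>i\<bar>)}" by auto
    then have "cgen {i} \<subseteq> cgen {- int (nat \<bar>i\<bar>)..int (nat \<bar>i\<bar>)}" unfolding cgen_def by blast
    then show ?thesis unfolding CS_def using sigma_sets_superset_generator by blast
  qed
  ultimately show "a \<in> sigma_sets (space BM) GG"
    unfolding GG_def by (blast intro: sigma_sets.Basic)
next
  fix b assume "b \<in> GG"
  then have "b \<in> CS UNIV" unfolding GG_def using CS_mono[of _ UNIV] by blast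
  then show "b \<in> sigma_sets (space BM) (cgen UNIV)" unfolding CS_def .
qed

lemma measure_symdiff: "X \<in> sets BM \<Longrightarrow> Y \<in> sets BM \<Longrightarrow> \<bar>measure BM X - measure BM Y\<bar> \<le> measure BM (sym_diff X Y)"
proof -
  assume X: "X \<in> sets BM" and Y: "Y \<in> sets BM"
  have "measure BM X \<le> measure BM (Y \<union> sym_diff X Y)"
    by (rule P.finite_measure_mono) (use X Y in auto)
  also have "\<dots> \<le> measure BM Y + measure BM (sym_diff X Y)"
    by (rule measure_Un_le) (use X Y in auto)
  finally have 1: "measure BM X \<le> measure BM Y + measure BM (sym_diff X Y)" .
  have "measure BM Y \<le> measure BM (X \<union> sym_diff X Y)"
    by (rule P.finite_measure_mono) (use X Y in auto)
  also have "\<dots> \<le> measure BM X + measure BM (sym_diff X Y)"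
    by (rule measure_Un_le) (use X Y in auto)
  finally show ?thesis using 1 by linarith
qed

lemma shift_nat_inv:
  assumes inv: "shift 1 -` A \<inter> space BM = A"
  shows "shift (int n) -` A \<inter> space BM = A"
proof (induction n)
  case 0
  have "A \<subseteq> space BM" using inv by blast
  then show ?case by auto
next
  case (Suc n)
  have "shift (int (Suc n)) -` A \<inter> space BM = {\<omega> \<in> space BM. shift (int n) \<omega> \<in> shift 1 -` A \<inter> space BM}"
    using shift_space by (auto simp: shift_add add.commute)
  also have "\<dots> = A" using Suc inv by auto
  finally show ?case .
qed

lemma ergodic_BM: "ergodic BM (shift 1)"
  unfolding ergodic_def
proof (intro ballI impI)
  fix A assume AM: "A \<in> sets BM" and inv: "shift 1 -` A \<inter> space BM = A"
  define p where "p = measure BM A"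
  have key: "\<bar>p - p^2\<bar> \<le> 5 * e" if e: "e > 0" for e
  proof -
    obtain B where B: "B \<in> GG" "measure BM (sym_diff A B) < e"
      using approx_sets[OF _ GG_alg sets_BM_GG AM] e P.finite_measure_axioms by blast
    then obtain N where BN: "B \<in> CS {- int N..int N}" unfolding GG_def by auto
    have BM: "B \<in> sets BM" using BN CS_sub by auto
    define n where "n = 2 * int N + 1"
    define B' where "B' = shift n -` B \<inter> space BM"
    have B'CS: "B' \<in> CS ((\<lambda>i. i + n) ` {- int N..int N})"
      unfolding B'_def by (rule CS_shift_mem[OF BN])
    have B'M: "B' \<in> sets BM" using B'CS CS_sub by auto
    have disj: "{- int N..int N} \<inter> (\<lambda>i. i + n) ` {- int N..int N} = {}" unfolding n_def by auto
    have "measure BM (B \<inter> B') = measure BM B * measure BM B'"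
      using P.indep_setD[OF indep_CS[OF disj] BN B'CS] by simp
    also have "measure BM B' = measure BM B" unfolding B'_def by (rule measure_shift[OF BM])
    finally have indep: "measure BM (B \<inter> B') = (measure BM B)^2" by (simp add: power2_eq_square)
    have An: "shift n -` A \<inter> space BM = A"
      using shift_nat_inv[OF inv, of "nat n"] by (simp add: n_def)
    have sd: "sym_diff A B' \<subseteq> sym_diff A B \<union> (shift n -` (sym_diff A B) \<inter> space BM)"
      using An unfolding B'_def by auto
    have sdM: "sym_diff A B \<in> sets BM" using AM BM by auto
    have sM: "shift n -` (sym_diff A B) \<inter> space BM \<in> sets BM" by (rule measurable_sets[OF shift_meas sdM])
    have "measure BM (sym_diff A B') \<le> measure BM (sym_diff A B \<union> (shift n -` (sym_diff A B) \<inter> space BM))"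
      by (rule P.finite_measure_mono[OF sd sets.Un[OF sdM sM]])
    also have "\<dots> \<le> measure BM (sym_diff A B) + measure BM (shift n -` (sym_diff A B) \<inter> space BM)"
      by (rule measure_Un_le[OF sdM sM])
    also have "\<dots> = 2 * measure BM (sym_diff A B)" using measure_shift[OF sdM] by simp
    finally have e2: "measure BM (sym_diff A B') \<le> 2 * measure BM (sym_diff A B)" .
    have "sym_diff A (B \<inter> B') \<subseteq> sym_diff A B \<union> sym_diff A B'" by auto
    then have "measure BM (sym_diff A (B \<inter> B')) \<le> measure BM (sym_diff A B \<union> sym_diff A B')"
      by (rule P.finite_measure_mono) (use AM BM B'M in auto)
    also have "\<dots> \<le> measure BM (sym_diff A B) + measure BM (sym_diff A B')"
      by (rule measure_Un_le) (use AM BM B'M in auto)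
    finally have "measure BM (sym_diff A (B \<inter> B')) \<le> 3 * measure BM (sym_diff A B)" using e2 by linarith
    moreover have "\<bar>p - measure BM (B \<inter> B')\<bar> \<le> measure BM (sym_diff A (B \<inter> B'))"
      unfolding p_def by (rule measure_symdiff) (use AM BM B'M in auto)
    ultimately have 1: "\<bar>p - (measure BM B)^2\<bar> \<le> 3 * e" using indep B(2) by linarith
    have 2: "\<bar>measure BM B - p\<bar> \<le> e"
      using measure_symdiff[OF BM AM] B(2) unfolding p_def by (simp add: Un_commute)
    have "\<bar>(measure BM B)^2 - p^2\<bar> = \<bar>measure BM B - p\<bar> * \<bar>measure BM B + p\<bar>"
      by (simp add: power2_eq_square abs_mult[symmetric] algebra_simps)
    also have "\<bar>measure BM B + p\<bar> \<le> 2"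
    proof -
      have "measure BM A \<le> 1" "measure BM B \<le> 1" "0 \<le> measure BM A" "0 \<le> measure BM B"
        by (simp_all add: P.prob_le_1)
      then have "0 \<le> measure BM B + p" "measure BM B + p \<le> 2" unfolding p_def by linarith+
      then show ?thesis by simp
    qed
    then have "\<bar>measure BM B - p\<bar> * \<bar>measure BM B + p\<bar> \<le> e * 2"
      using 2 by (intro mult_mono) auto
    finally show ?thesis using 1 by linarith
  qed
  have "p - p^2 = 0"
  proof (rule ccontr)
    assume "p - p^2 \<noteq> 0"
    then have "\<bar>p - p^2\<bar> / 10 > 0" by simp
    from key[OF this] show False using \<open>p - p^2 \<noteq> 0\<close> by simp
  qed
  then have "p * (1 - p) = 0" by (simp add: power2_eq_square algebra_simps)
  then show "measure BM A = 0 \<or> measure BM A = 1" unfolding p_def by auto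
qed



definition ss :: "(int \<Rightarrow> real) \<Rightarrow> real" where "ss \<omega> = (\<Sum>k. (1/4)^k * \<omega> (int k))"
definition hh :: "(int \<Rightarrow> real) \<Rightarrow> real" where "hh \<omega> = - ss \<omega> / 3"
definition mm :: "(int \<Rightarrow> real) \<Rightarrow> real" where "mm \<omega> = 2 * \<omega> 0 - 1"
definition ff :: "(int \<Rightarrow> real) \<Rightarrow> real" where "ff \<omega> = mm \<omega> + hh \<omega> - hh (shift 1 \<omega>)"

lemma w01: "\<omega> \<in> space BM \<Longrightarrow> \<omega> k = 0 \<or> \<omega> k = 1"
  by (auto simp: space_BM)

lemma ss_sums: assumes w: "\<omega> \<in> space BM" shows "(\<lambda>k. (1/4)^k * \<omega> (int k)) sums ss \<omega>"
proof -
  have "summable (\<lambda>k. (1/4::real)^k * \<omega> (int k))"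
  proof (rule summable_comparison_test'[where g="\<lambda>k. (1/4)^k"])
    show "summable (\<lambda>k. (1/4::real)^k)" by (rule summable_geometric) simp
    fix n show "norm ((1/4::real)^n * \<omega> (int n)) \<le> (1/4)^n"
      using w01[OF w, of "int n"] by auto
  qed
  then show ?thesis unfolding ss_def by (rule summable_sums)
qed

lemma ss_bounds: assumes w: "\<omega> \<in> space BM" shows "0 \<le> ss \<omega>" "ss \<omega> \<le> 4/3"
proof -
  have nn: "0 \<le> (1/4::real)^k * \<omega> (int k)" for k using w01[OF w, of "int k"] by auto
  show "0 \<le> ss \<omega>" by (rule sums_le[OF _ sums_zero ss_sums[OF w]]) (use nn in blast)
  have "(\<lambda>k. (1/4::real)^k) sums (4/3)" using geometric_sums[of "1/4::real"] by simp
  moreover have "(1/4::real)^k * \<omega> (int k) \<le> (1/4)^k" for k using w01[OF w, of "int k"] by auto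
  ultimately show "ss \<omega> \<le> 4/3" by (intro sums_le[OF _ ss_sums[OF w]]) auto
qed

lemma ss_rec: assumes w: "\<omega> \<in> space BM" shows "ss \<omega> = \<omega> 0 + ss (shift 1 \<omega>) / 4"
proof -
  have "(\<lambda>k. (1/4)^k * (shift 1 \<omega>) (int k)) sums ss (shift 1 \<omega>)" by (rule ss_sums[OF shift_space[OF w]])
  then have "(\<lambda>k. (1/4) * ((1/4)^k * (shift 1 \<omega>) (int k))) sums ((1/4) * ss (shift 1 \<omega>))" by (rule sums_mult)
  moreover have "(\<lambda>k. (1/4) * ((1/4)^k * (shift 1 \<omega>) (int k))) = (\<lambda>k. (1/4::real)^(Suc k) * \<omega> (int (Suc k)))"
    by (auto simp: shift_def fun_eq_iff add.commute)
  ultimately have "(\<lambda>k. (1/4::real)^(Suc k) * \<omega> (int (Suc k))) sums ((1/4) * ss (shift 1 \<omega>))" by simp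
  then have "(\<lambda>k. (1/4::real)^k * \<omega> (int k)) sums ((1/4) * ss (shift 1 \<omega>) + (1/4)^0 * \<omega> (int 0))"
    by (subst (asm) sums_Suc_iff) simp
  with ss_sums[OF w] show ?thesis by (simp add: sums_unique2 ac_simps)
qed

lemma ff_eq: assumes w: "\<omega> \<in> space BM" shows "ff \<omega> = ss \<omega> + 2/3 * \<omega> 0 - 1"
  using ss_rec[OF w] by (simp add: ff_def hh_def mm_def field_simps)

definition Phi :: "real \<Rightarrow> real" where
  "Phi y = (let a = (if y + 1 \<ge> 1 then 1 else 0 :: real); s = 4 * (y + 1 - 5/3 * a);
            b = (if s \<ge> 1 then 1 else 0 :: real) in s + 2/3 * b - 1)"

lemma Phi_meas[measurable]: "Phi \<in> borel_measurable borel"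
  unfolding Phi_def Let_def by measurable

lemma ff_Phi: assumes w: "\<omega> \<in> space BM" shows "ff \<omega> = Phi (ff (shift (-1) \<omega>))"
proof -
  let ?w = "shift (-1) \<omega>"
  have w': "?w \<in> space BM" by (rule shift_space[OF w])
  have s1: "shift 1 ?w = \<omega>" by (simp add: shift_add)
  have "ss ?w = \<omega> (-1) + ss \<omega> / 4" using ss_rec[OF w'] s1 by (simp add: shift_def)
  then have v: "ff ?w + 1 = 5/3 * \<omega> (-1) + ss \<omega> / 4" using ff_eq[OF w'] by (simp add: shift_def)
  have b: "0 \<le> ss \<omega>" "ss \<omega> \<le> 4/3" using ss_bounds[OF w] by auto
  have om1: "\<omega> (-1) = 0 \<or> \<omega> (-1) = 1" using w by (auto simp: space_BM)
  have a: "(if ff ?w + 1 \<ge> 1 then 1 else 0 :: real) = \<omega> (-1)" using om1 v b by auto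
  have s: "4 * (ff ?w + 1 - 5/3 * \<omega> (-1)) = ss \<omega>" using v by simp
  have b2: "0 \<le> ss (shift 1 \<omega>)" "ss (shift 1 \<omega>) \<le> 4/3" using ss_bounds[OF shift_space[OF w]] by auto
  have om0: "\<omega> 0 = 0 \<or> \<omega> 0 = 1" using w by (auto simp: space_BM)
  have c: "(if ss \<omega> \<ge> 1 then 1 else 0 :: real) = \<omega> 0" using ss_rec[OF w] om0 b2 by auto
  show ?thesis unfolding Phi_def Let_def a s c ff_eq[OF w] by simp
qed

lemma ss_meas[measurable]: "ss \<in> borel_measurable BM"
  unfolding ss_def by measurable

lemma ff_meas[measurable]: "ff \<in> borel_measurable BM"
proof -
  have "(\<lambda>\<omega>. ss (shift 1 \<omega>)) \<in> borel_measurable BM"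
    using measurable_compose[OF shift_meas ss_meas] .
  then show ?thesis unfolding ff_def hh_def mm_def by measurable
qed



lemma coord_CS: "(\<lambda>\<omega>. (g::real\<Rightarrow>real) (\<omega> j)) -` B \<inter> space BM \<in> CS {j}"
proof -
  have "(\<lambda>\<omega>. g (\<omega> j)) -` B \<inter> space BM = (\<lambda>\<omega>. \<omega> j) -` (g -` B \<inter> {0,1}) \<inter> space BM"
    by (auto simp: space_BM)
  moreover have "g -` B \<inter> {0,1} \<in> sets M0" by (auto simp: sets_M0)
  ultimately have "(\<lambda>\<omega>. g (\<omega> j)) -` B \<inter> space BM \<in> cgen {j}" unfolding cgen_def by blast
  then show ?thesis unfolding CS_def by (rule sigma_sets.Basic)
qed

lemma indep_integral:
  fixes X Y :: "(int \<Rightarrow> real) \<Rightarrow> real"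
  assumes IJ: "I \<inter> J = {}"
    and X: "X \<in> borel_measurable BM" "\<And>B. B \<in> sets borel \<Longrightarrow> X -` B \<inter> space BM \<in> CS I"
    and Y: "Y \<in> borel_measurable BM" "\<And>B. B \<in> sets borel \<Longrightarrow> Y -` B \<inter> space BM \<in> CS J"
    and iX: "integrable BM X" and iY: "integrable BM Y"
  shows "(\<integral>\<omega>. X \<omega> * Y \<omega> \<partial>BM) = (\<integral>\<omega>. X \<omega> \<partial>BM) * (\<integral>\<omega>. Y \<omega> \<partial>BM)"
proof (rule P.indep_var_lebesgue_integral[OF _ iX iY])
  have ind: "P.indep_sets (case_bool (CS I) (CS J)) UNIV"
    using indep_CS[OF IJ] unfolding P.indep_set_def .
  show "P.indep_var borel X borel Y"
    unfolding P.indep_var_def P.indep_vars_def2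
  proof
    show "\<forall>i\<in>UNIV. P.random_variable (case_bool borel borel i) (case_bool X Y i)"
      using X Y by (auto split: bool.split)
    show "P.indep_sets (\<lambda>i. {case_bool X Y i -` A \<inter> space BM |A. A \<in> sets (case_bool borel borel i)}) UNIV"
      by (rule P.indep_sets_mono_sets[OF ind]) (use X Y in \<open>auto split: bool.split\<close>)
  qed
qed

lemma distr_coord: "distr BM M0 (\<lambda>\<omega>. \<omega> i) = M0"
  unfolding BM_def by (rule distr_PiM_component) (auto simp: prob_M0)

lemma integral_coord: "(\<integral>\<omega>. (g::real\<Rightarrow>real) (\<omega> i) \<partial>BM) = (g 0 + g 1) / 2"
proof -
  have "(\<integral>\<omega>. g (\<omega> i) \<partial>BM) = (\<integral>x. g x \<partial>distr BM M0 (\<lambda>\<omega>. \<omega> i))"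
    by (rule integral_distr[symmetric]) (auto simp: coord_meas M0_borel)
  also have "\<dots> = (g 0 + g 1) / 2"
    unfolding distr_coord by (simp add: M0_def integral_uniform_count_measure)
  finally show ?thesis .
qed

lemma bounded_integrable: "(g::(int\<Rightarrow>real)\<Rightarrow>real) \<in> borel_measurable BM \<Longrightarrow> (\<And>\<omega>. \<omega> \<in> space BM \<Longrightarrow> \<bar>g \<omega>\<bar> \<le> (C::real)) \<Longrightarrow> integrable BM g"
  by (rule P.integrable_const_bound[where B=C]) auto

lemma abs_c: "\<omega> \<in> space BM \<Longrightarrow> \<bar>2 * \<omega> k - 1\<bar> \<le> (1::real)"
  by (drule w01[of _ k]) auto

lemma mm_shift: "\<omega> \<in> space BM \<Longrightarrow> mm (shift i \<omega>) = 2 * \<omega> i - 1"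
  by (simp add: mm_def shift_def)

lemma mm_orth:
  assumes "i \<noteq> j"
  shows "(\<integral>\<omega>. (2 * \<omega> i - 1) * (2 * \<omega> j - 1) \<partial>BM) = 0"
proof -
  have "(\<integral>\<omega>. (2 * \<omega> i - 1) * (2 * \<omega> j - 1) \<partial>BM) = (\<integral>\<omega>. (2 * \<omega> i - 1) \<partial>BM) * (\<integral>\<omega>. (2 * \<omega> j - 1) \<partial>BM)"
  proof (rule indep_integral[of "{i}" "{j}"])
    show "{i} \<inter> {j} = {}" using assms by auto
    show "(\<lambda>\<omega>. 2 * \<omega> i - 1) -` B \<inter> space BM \<in> CS {i}" for B using coord_CS[of "\<lambda>x. 2*x-1" i B] by simp
    show "(\<lambda>\<omega>. 2 * \<omega> j - 1) -` B \<inter> space BM \<in> CS {j}" for B using coord_CS[of "\<lambda>x. 2*x-1" j B] by simp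
    show "integrable BM (\<lambda>\<omega>. 2 * \<omega> i - 1)"
      by (rule bounded_integrable[where C=1]) (use abs_c in \<open>auto\<close>)
    show "integrable BM (\<lambda>\<omega>. 2 * \<omega> j - 1)"
      by (rule bounded_integrable[where C=1]) (use abs_c in \<open>auto\<close>)
  qed auto
  also have "\<dots> = 0" using integral_coord[of "\<lambda>x. 2*x-1" i] by simp
  finally show ?thesis .
qed



lemma funpow_shift: "\<omega> \<in> space BM \<Longrightarrow> (shift 1 ^^ n) \<omega> = shift (int n) \<omega>"
  by (induction n arbitrary: \<omega>) (auto simp: shift_add add.commute)

lemma Ssum_eq: "\<omega> \<in> space BM \<Longrightarrow> Ssum (shift 1) g n \<omega> = (\<Sum>i<n. g (shift (int i) \<omega>))"
  by (simp add: Ssum_def funpow_shift)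

lemma Ssum_meas[measurable]: "g \<in> borel_measurable BM \<Longrightarrow> Ssum (shift 1) g n \<in> borel_measurable BM"
proof -
  assume g: "g \<in> borel_measurable BM"
  have "(\<lambda>x. g ((shift 1 ^^ i) x)) \<in> borel_measurable BM" for i
    using measurable_compose[OF measurable_compose_n[OF shift_meas] g] .
  then show ?thesis unfolding Ssum_def by (intro borel_measurable_sum) auto
qed

lemma hh_bound: "\<omega> \<in> space BM \<Longrightarrow> \<bar>hh \<omega>\<bar> \<le> 4/9"
  using ss_bounds[of \<omega>] by (simp add: hh_def)

lemma telescope: "\<omega> \<in> space BM \<Longrightarrow> Ssum (shift 1) (\<lambda>x. ff x - mm x) n \<omega> = hh \<omega> - hh (shift (int n) \<omega>)"
proof (induction n)
  case (Suc n)
  have "shift 1 (shift (int n) \<omega>) = shift (int (Suc n)) \<omega>" by (simp add: shift_add add.commute)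
  with Suc show ?case by (simp add: Ssum_eq ff_def)
qed (simp add: Ssum_def)

lemma hh_meas[measurable]: "hh \<in> borel_measurable BM" unfolding hh_def by measurable
lemma mm_meas[measurable]: "mm \<in> borel_measurable BM" unfolding mm_def by measurable

definition FF :: "int \<Rightarrow> (int \<Rightarrow> real) measure" where "FF j = sigma (space BM) (cgen {..j})"

lemma cgen_Pow: "cgen I \<subseteq> Pow (space BM)" using cgen_sub sets.sets_into_space[of _ BM] by blast

lemma space_FF: "space (FF j) = space BM" unfolding FF_def by (simp add: space_measure_of_conv)
lemma sets_FF: "sets (FF j) = CS {..j}" unfolding FF_def CS_def by (rule sets_measure_of[OF cgen_Pow])

lemma meas_sigma_cgen:
  assumes "\<And>B. B \<in> sets borel \<Longrightarrow> g -` B \<inter> space BM \<in> CS I"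
  shows "g \<in> borel_measurable (sigma (space BM) (cgen I))"
  by (rule measurableI) (auto simp: space_measure_of_conv sets_measure_of[OF cgen_Pow] CS_def[symmetric] assms)

lemma meas_sigma_cgenD:
  assumes "g \<in> borel_measurable (sigma (space BM) (cgen I))" "B \<in> sets borel"
  shows "g -` B \<inter> space BM \<in> CS I"
  using measurable_sets[OF assms] by (simp add: space_measure_of_conv sets_measure_of[OF cgen_Pow] CS_def[symmetric])

lemma CS_borel: "(\<And>B. B \<in> sets borel \<Longrightarrow> g -` B \<inter> space BM \<in> CS I) \<Longrightarrow> g \<in> borel_measurable BM"
  by (rule measurableI) (use CS_sub in auto)

lemma mm_CS: "B \<in> sets borel \<Longrightarrow> mm -` B \<inter> space BM \<in> CS {0}"
  using coord_CS[of "\<lambda>x. 2*x-1" 0 B] by (simp add: mm_def[abs_def])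

lemma sq_c: "\<omega> \<in> space BM \<Longrightarrow> (2 * \<omega> k - 1)^2 = (1::real)"
  by (drule w01[of _ k]) auto

lemma sq_le1: "\<bar>x::real\<bar> \<le> 1 \<Longrightarrow> x^2 \<le> 1"
  using power_le_one[of "\<bar>x\<bar>" 2] by simp

lemma FF_approx: "martingale_approx BM (shift 1) ff FF"
  unfolding martingale_approx_def
proof (intro exI conjI ballI)
  have mmF: "mm \<in> borel_measurable (FF 0)"
    unfolding FF_def by (rule meas_sigma_cgen) (use mm_CS CS_mono[of "{0}" "{..0}"] in auto)
  show "mm \<in> L2 BM (FF 0)" unfolding L2_def
  proof (intro CollectI conjI mmF)
    show "integrable BM (\<lambda>x. (mm x)\<^sup>2)"
      by (rule bounded_integrable[where C=1]) (use sq_c[of _ 0] in \<open>auto simp: mm_def\<close>)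
  qed
  fix g assume "g \<in> L2 BM (FF (-1))"
  then have gF: "g \<in> borel_measurable (FF (-1))" and g2: "integrable BM (\<lambda>x. (g x)\<^sup>2)" unfolding L2_def by auto
  have gCS: "g -` B \<inter> space BM \<in> CS {..-1}" if "B \<in> sets borel" for B
    using meas_sigma_cgenD[OF gF[unfolded FF_def] that] .
  have gM: "g \<in> borel_measurable BM" by (rule CS_borel[OF gCS])
  have ig: "integrable BM g" by (rule P.square_integrable_imp_integrable[OF gM g2])
  have im: "integrable BM mm"
    by (rule bounded_integrable[where C=1]) (use abs_c[of _ 0] in \<open>auto simp: mm_def\<close>)
  have "(\<integral>x. mm x * g x \<partial>BM) = (\<integral>x. mm x \<partial>BM) * (\<integral>x. g x \<partial>BM)"
    by (rule indep_integral[of "{0}" "{..-1}"]) (use mm_CS gCS ig im gM in auto)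
  also have "(\<integral>x. mm x \<partial>BM) = 0" using integral_coord[of "\<lambda>x. 2*x-1" 0] by (simp add: mm_def)
  finally show "(\<integral>x. mm x * g x \<partial>BM) = 0" by simp
next
  let ?S = "\<lambda>n. Ssum (shift 1) (\<lambda>x. ff x - mm x) n"
  have bnd: "L2norm BM (?S n) \<le> 1" for n
  proof -
    have b: "\<bar>?S n \<omega>\<bar> \<le> 1" if "\<omega> \<in> space BM" for \<omega>
      using telescope[OF that, of n] hh_bound[OF that] hh_bound[OF shift_space[OF that, of "int n"]] by simp
    have "(\<integral>x. (?S n x)\<^sup>2 \<partial>BM) \<le> (\<integral>x. 1 \<partial>BM)"
    proof (rule integral_mono)
      show "integrable BM (\<lambda>x. (?S n x)\<^sup>2)"
        by (rule bounded_integrable[where C=1]) (use b sq_le1 in auto)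
      show "(?S n x)\<^sup>2 \<le> 1" if "x \<in> space BM" for x
        using sq_le1[OF b[OF that]] .
    qed auto
    then show ?thesis unfolding L2norm_def by (simp add: P.prob_space)
  qed
  show "(\<lambda>n. L2norm BM (?S n) / sqrt (real n)) \<longlonglongrightarrow> 0"
  proof (rule tendsto_sandwich[of "\<lambda>_. 0" _ _ "\<lambda>n. 1 / sqrt (real n)"])
    show "\<forall>\<^sub>F n in sequentially. 0 \<le> L2norm BM (?S n) / sqrt (real n)"
      by (auto simp: L2norm_def)
    show "\<forall>\<^sub>F n in sequentially. L2norm BM (?S n) / sqrt (real n) \<le> 1 / sqrt (real n)"
      using bnd by (intro always_eventually allI divide_right_mono) auto
    have "(\<lambda>n. sqrt (1 / real n)) \<longlonglongrightarrow> sqrt 0"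
      by (intro tendsto_real_sqrt lim_1_over_n)
    then show "(\<lambda>n. 1 / sqrt (real n)) \<longlonglongrightarrow> 0" by (simp add: real_sqrt_divide)
  qed auto
qed



definition NG :: "int \<Rightarrow> (int \<Rightarrow> real) set set" where
  "NG j = {(\<lambda>x. ff (shift i x)) -` B \<inter> space BM | i B. i \<le> j \<and> B \<in> sets borel}"

lemma NF_eq: "natural_filtration BM (shift 1) ff j = sigma (space BM) (NG j)"
proof -
  have "(\<lambda>x. ff (Tpow (space BM) (shift 1) i x)) -` B \<inter> space BM = (\<lambda>x. ff (shift i x)) -` B \<inter> space BM" for i B
    by (auto simp: Tpow_shift)
  then show ?thesis unfolding natural_filtration_def NG_def by simp
qed

lemma ffs_meas: "(\<lambda>x. ff (shift i x)) \<in> borel_measurable BM"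
  using measurable_compose[OF shift_meas ff_meas] .

lemma NG_sub: "NG j \<subseteq> sets BM"
  unfolding NG_def using ffs_meas by (auto simp: measurable_def)

lemma NG_Pow: "NG j \<subseteq> Pow (space BM)" unfolding NG_def by auto

lemma space_NF: "space (natural_filtration BM (shift 1) ff j) = space BM"
  unfolding NF_eq by (simp add: space_measure_of_conv)

lemma sets_NF: "sets (natural_filtration BM (shift 1) ff j) = sigma_sets (space BM) (NG j)"
  unfolding NF_eq by (rule sets_measure_of[OF NG_Pow])

lemma NG_down: "NG j \<subseteq> NG (j - 1)"
proof
  fix X assume "X \<in> NG j"
  then obtain i B where iB: "i \<le> j" "B \<in> sets borel" "X = (\<lambda>x. ff (shift i x)) -` B \<inter> space BM"
    unfolding NG_def by blast
  have "X = (\<lambda>x. ff (shift (i - 1) x)) -` (Phi -` B) \<inter> space BM"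
  proof -
    have "ff (shift i x) = Phi (ff (shift (i - 1) x))" if "x \<in> space BM" for x
      using ff_Phi[OF shift_space[OF that, of i]] by (simp add: shift_add)
    then show ?thesis using iB(3) by auto
  qed
  moreover have "Phi -` B \<in> sets borel"
    using measurable_sets[OF Phi_meas iB(2)] by simp
  ultimately show "X \<in> NG (j - 1)" unfolding NG_def
    by (intro CollectI exI[of _ "i - 1"] exI[of _ "Phi -` B"]) (use iB(1) in simp)
qed

lemma NG_down_n: "NG j \<subseteq> NG (j - int n)"
proof (induction n)
  case (Suc n)
  have "NG (j - int n) \<subseteq> NG (j - int n - 1)" by (rule NG_down)
  with Suc show ?case by (simp add: algebra_simps)
qed simp

lemma NG_mono: assumes jk: "j \<le> k" shows "NG j \<subseteq> NG k"
proof
  fix X assume "X \<in> NG j"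
  then obtain i B where iB: "i \<le> j" "B \<in> sets borel" "X = (\<lambda>x. ff (shift i x)) -` B \<inter> space BM"
    unfolding NG_def by blast
  then show "X \<in> NG k" unfolding NG_def
    by (intro CollectI exI[of _ i] exI[of _ B]) (use jk in simp)
qed

lemma NG_all: "NG j \<subseteq> NG k"
proof (cases "j \<le> k")
  case False
  then have "k = j - int (nat (j - k))" by simp
  then show ?thesis using NG_down_n[of j "nat (j - k)"] by simp
qed (rule NG_mono)

lemma sets_NF_all: "sets (natural_filtration BM (shift 1) ff j) = sets (natural_filtration BM (shift 1) ff 0)"
  unfolding sets_NF using NG_all[of j 0] NG_all[of 0 j]
  by (intro subset_antisym sigma_sets_mono) (auto intro: sigma_sets.Basic)


lemma ff_nz: assumes w: "\<omega> \<in> space BM" shows "ff \<omega> \<noteq> 0" and "\<bar>ff \<omega>\<bar> \<le> 2"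
proof -
  have t: "0 \<le> ss (shift 1 \<omega>)" "ss (shift 1 \<omega>) \<le> 4/3" using ss_bounds[OF shift_space[OF w]] by auto
  have e: "ff \<omega> = \<omega> 0 + ss (shift 1 \<omega>) / 4 + 2/3 * \<omega> 0 - 1" using ff_eq[OF w] ss_rec[OF w] by simp
  show "ff \<omega> \<noteq> 0" using w01[OF w, of 0] e t by auto
  show "\<bar>ff \<omega>\<bar> \<le> 2" using w01[OF w, of 0] e t by auto
qed

lemma ff_int: "integrable BM ff"
  by (rule bounded_integrable[where C=2]) (use ff_nz in auto)

lemma not_regular: "\<not> regular BM ff (natural_filtration BM (shift 1) ff)"
proof
  let ?NF = "natural_filtration BM (shift 1) ff"
  let ?X = "F_minf BM ?NF"
  assume reg: "regular BM ff ?NF"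
  have IntPow: "(\<Inter>j. sets (?NF j)) \<subseteq> Pow (space BM)"
    using sets.sets_into_space[of _ "?NF 0"] space_NF[of 0] by blast
  have spX: "space ?X = space BM" unfolding F_minf_def by (simp add: space_measure_of_conv)
  have setsX: "sets ?X = sigma_sets (space BM) (\<Inter>j. sets (?NF j))"
    unfolding F_minf_def by (rule sets_measure_of[OF IntPow])
  have NF0: "sets (?NF 0) \<subseteq> sets BM" unfolding sets_NF by (rule sets.sigma_sets_subset[OF NG_sub])
  have subX: "sets ?X \<subseteq> sets BM"
    unfolding setsX by (rule sets.sigma_sets_subset) (use NF0 in blast)
  have "finite_measure_subalgebra BM ?X"
    by (intro finite_measure_subalgebra.intro P.finite_measure_axioms finite_measure_subalgebra_axioms.intro)
       (simp add: subalgebra_def subX spX)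
  then have sfs: "sigma_finite_subalgebra BM ?X" by (rule finite_measure_subalgebra_is_sigma_finite)
  have ffX: "ff \<in> borel_measurable ?X"
  proof (rule measurableI)
    fix B :: "real set" assume B: "B \<in> sets borel"
    have "ff -` B \<inter> space BM \<in> NG 0"
      unfolding NG_def by (intro CollectI exI[of _ 0] exI[of _ B]) (simp add: B)
    then have "ff -` B \<inter> space BM \<in> NG j" for j using NG_all[of 0 j] by blast
    then have "ff -` B \<inter> space BM \<in> (\<Inter>j. sets (?NF j))"
      unfolding sets_NF by (auto intro: sigma_sets.Basic)
    then show "ff -` B \<inter> space ?X \<in> sets ?X" unfolding spX setsX by (rule sigma_sets.Basic)
  qed simp
  have "AE x in BM. real_cond_exp BM ?X ff x = ff x"
    by (rule sigma_finite_subalgebra.real_cond_exp_F_meas[OF sfs ff_int ffX])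
  moreover have "AE x in BM. real_cond_exp BM ?X ff x = 0" using reg unfolding regular_def by simp
  moreover have "AE x in BM. x \<in> space BM" by (rule AE_space)
  ultimately have "AE x in BM. False"
    by eventually_elim (use ff_nz in auto)
  then show False by (simp add: P.AE_False)
qed



definition aa :: "nat \<Rightarrow> (int \<Rightarrow> real) \<Rightarrow> real" where "aa n \<omega> = (\<Sum>i<n. 2 * \<omega> (int i) - 1)"

lemma aa_meas: "aa n \<in> borel_measurable BM" unfolding aa_def by measurable

lemma aa_bound: "\<omega> \<in> space BM \<Longrightarrow> \<bar>aa n \<omega>\<bar> \<le> real n"
proof -
  assume w: "\<omega> \<in> space BM"
  have "\<bar>aa n \<omega>\<bar> \<le> (\<Sum>i<n. \<bar>2 * \<omega> (int i) - 1\<bar>)" unfolding aa_def by (rule sum_abs)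
  also have "\<dots> \<le> (\<Sum>i<n. 1)" by (rule sum_mono) (use abs_c[OF w] in auto)
  finally show ?thesis by simp
qed

lemma cc_int: "integrable BM (\<lambda>\<omega>. (2 * \<omega> i - 1) * (2 * \<omega> j - 1))"
proof (rule bounded_integrable[where C=1])
  show "(\<lambda>\<omega>. (2 * \<omega> i - 1) * (2 * \<omega> j - 1)) \<in> borel_measurable BM" by measurable
  fix \<omega> assume w: "\<omega> \<in> space BM"
  show "\<bar>(2 * \<omega> i - 1) * (2 * \<omega> j - 1)\<bar> \<le> (1::real)"
    unfolding abs_mult using abs_c[OF w, of i] abs_c[OF w, of j] by (intro mult_le_one) auto
qed

lemma int_aa2: "(\<integral>\<omega>. (aa n \<omega>)\<^sup>2 \<partial>BM) = real n"
proof -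
  have "(\<integral>\<omega>. (aa n \<omega>)\<^sup>2 \<partial>BM) = (\<integral>\<omega>. (\<Sum>i<n. \<Sum>j<n. (2 * \<omega> (int i) - 1) * (2 * \<omega> (int j) - 1)) \<partial>BM)"
    unfolding aa_def power2_eq_square sum_product ..
  also have "\<dots> = (\<Sum>i<n. \<Sum>j<n. (\<integral>\<omega>. (2 * \<omega> (int i) - 1) * (2 * \<omega> (int j) - 1) \<partial>BM))"
    by (simp add: integral_sum cc_int)
  also have "\<dots> = (\<Sum>i<n. \<Sum>j<n. (if i = j then 1 else 0))"
  proof (intro sum.cong refl)
    fix i j assume "i \<in> {..<n}" "j \<in> {..<n}"
    show "(\<integral>\<omega>. (2 * \<omega> (int i) - 1) * (2 * \<omega> (int j) - 1) \<partial>BM) = (if i = j then 1 else 0)"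
    proof (cases "i = j")
      case True
      have "(\<integral>\<omega>. (2 * \<omega> (int i) - 1) * (2 * \<omega> (int i) - 1) \<partial>BM) = (\<integral>\<omega>. 1 \<partial>BM)"
        by (rule Bochner_Integration.integral_cong[OF refl]) (use sq_c in \<open>simp add: power2_eq_square\<close>)
      then show ?thesis using True by (simp add: P.prob_space)
    next
      case False
      then show ?thesis using mm_orth[of "int i" "int j"] by simp
    qed
  qed
  also have "\<dots> = real n" by simp
  finally show ?thesis .
qed

lemma Ssum_ff: "\<omega> \<in> space BM \<Longrightarrow> Ssum (shift 1) ff n \<omega> = aa n \<omega> + (hh \<omega> - hh (shift (int n) \<omega>))"
proof -
  assume w: "\<omega> \<in> space BM"
  have "Ssum (shift 1) ff n \<omega> = Ssum (shift 1) (\<lambda>x. ff x - mm x) n \<omega> + (\<Sum>i<n. mm (shift (int i) \<omega>))"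
    using w by (simp add: Ssum_eq sum_subtractf)
  also have "(\<Sum>i<n. mm (shift (int i) \<omega>)) = aa n \<omega>" unfolding aa_def using w by (simp add: mm_shift)
  finally show ?thesis using telescope[OF w] by simp
qed

lemma lower: assumes n: "n \<ge> 4" shows "L2norm BM (Ssum (shift 1) ff n) / sqrt (real n) \<ge> 1/2"
proof -
  let ?S = "Ssum (shift 1) ff n"
  have pw: "(?S \<omega>)\<^sup>2 \<ge> (aa n \<omega>)\<^sup>2 / 2 - 1" if w: "\<omega> \<in> space BM" for \<omega>
  proof -
    define a where "a = aa n \<omega>"
    define b where "b = hh \<omega> - hh (shift (int n) \<omega>)"
    have "\<bar>b\<bar> \<le> 1" using hh_bound[OF w] hh_bound[OF shift_space[OF w, of "int n"]] unfolding b_def by simp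
    then have b2: "b^2 \<le> 1" by (rule sq_le1)
    have "0 \<le> (a + 2 * b)^2" by simp
    then have "(a + b)^2 \<ge> a^2 / 2 - b^2" by (simp add: power2_eq_square algebra_simps)
    then show ?thesis using b2 Ssum_ff[OF w] unfolding a_def b_def by simp
  qed
  have Sbound: "\<bar>?S \<omega>\<bar> \<le> real n + 1" if w: "\<omega> \<in> space BM" for \<omega>
    using Ssum_ff[OF w] aa_bound[OF w, of n] hh_bound[OF w] hh_bound[OF shift_space[OF w, of "int n"]] by simp
  have iS: "integrable BM (\<lambda>x. (?S x)\<^sup>2)"
  proof (rule bounded_integrable[where C="(real n + 1)^2"])
    show "(\<lambda>x. (?S x)\<^sup>2) \<in> borel_measurable BM" using Ssum_meas[OF ff_meas] by measurable
    fix \<omega> assume w: "\<omega> \<in> space BM"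
    have "\<bar>?S \<omega>\<bar>^2 \<le> (real n + 1)^2" by (rule power_mono[OF Sbound[OF w]]) simp
    then show "\<bar>(?S \<omega>)\<^sup>2\<bar> \<le> (real n + 1)^2" by simp
  qed
  have ia: "integrable BM (\<lambda>x. (aa n x)\<^sup>2 / 2 - 1)"
  proof (rule bounded_integrable[where C="(real n)^2 + 1"])
    show "(\<lambda>x. (aa n x)\<^sup>2 / 2 - 1) \<in> borel_measurable BM" using aa_meas[of n] by measurable
    fix \<omega> assume w: "\<omega> \<in> space BM"
    have "\<bar>aa n \<omega>\<bar>^2 \<le> (real n)^2" by (rule power_mono[OF aa_bound[OF w]]) simp
    then have h: "(aa n \<omega>)^2 \<le> (real n)^2" by simp
    have z: "0 \<le> (aa n \<omega>)^2" by simp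
    show "\<bar>(aa n \<omega>)\<^sup>2 / 2 - 1\<bar> \<le> (real n)^2 + 1" unfolding abs_le_iff using h z by linarith
  qed
  have ia2: "integrable BM (\<lambda>x. (aa n x)\<^sup>2)"
  proof (rule bounded_integrable[where C="(real n)^2"])
    show "(\<lambda>x. (aa n x)\<^sup>2) \<in> borel_measurable BM" using aa_meas[of n] by measurable
    fix \<omega> assume w: "\<omega> \<in> space BM"
    have "\<bar>aa n \<omega>\<bar>^2 \<le> (real n)^2" by (rule power_mono[OF aa_bound[OF w]]) simp
    then show "\<bar>(aa n \<omega>)\<^sup>2\<bar> \<le> (real n)^2" by simp
  qed
  have "(\<integral>x. (aa n x)\<^sup>2 / 2 - 1 \<partial>BM) \<le> (\<integral>x. (?S x)\<^sup>2 \<partial>BM)"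
    by (rule integral_mono[OF ia iS]) (use pw in auto)
  moreover have "(\<integral>x. (aa n x)\<^sup>2 / 2 - 1 \<partial>BM) = real n / 2 - 1"
    using ia2 by (simp add: int_aa2 P.prob_space)
  ultimately have I: "real n / 4 \<le> (\<integral>x. (?S x)\<^sup>2 \<partial>BM)" using n by simp
  have "sqrt (real n) / 2 = sqrt (real n / 4)" by (simp add: real_sqrt_divide)
  also have "\<dots> \<le> L2norm BM ?S" unfolding L2norm_def using I by simp
  finally have "sqrt (real n) / 2 \<le> L2norm BM ?S" .
  moreover have "sqrt (real n) > 0" using n by simp
  ultimately show ?thesis by (simp add: field_simps)
qed


lemma no_ma: "\<not> martingale_approx BM (shift 1) ff (natural_filtration BM (shift 1) ff)"
proof
  let ?NF = "natural_filtration BM (shift 1) ff"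
  assume "martingale_approx BM (shift 1) ff ?NF"
  then obtain m where mL: "m \<in> L2 BM (?NF 0)" and orth: "\<forall>g\<in>L2 BM (?NF (-1)). (\<integral>x. m x * g x \<partial>BM) = 0"
    and lim: "(\<lambda>n. L2norm BM (Ssum (shift 1) (\<lambda>x. ff x - m x) n) / sqrt (real n)) \<longlonglongrightarrow> 0"
    unfolding martingale_approx_def by blast
  have m0: "m \<in> borel_measurable (?NF 0)" and m2: "integrable BM (\<lambda>x. (m x)\<^sup>2)" using mL unfolding L2_def by auto
  have "m \<in> borel_measurable (?NF (-1))"
    using m0 measurable_cong_sets[OF sets_NF_all[of "-1", symmetric] refl] by blast
  then have "m \<in> L2 BM (?NF (-1))" using m2 unfolding L2_def by auto
  then have "(\<integral>x. m x * m x \<partial>BM) = 0" using orth by blast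
  then have i0: "(\<integral>x. (m x)\<^sup>2 \<partial>BM) = 0" by (simp add: power2_eq_square)
  have sub0: "subalgebra BM (?NF 0)"
    unfolding subalgebra_def using sets.sigma_sets_subset[OF NG_sub, of 0] by (simp add: sets_NF space_NF)
  have mM: "m \<in> borel_measurable BM" by (rule measurable_from_subalg[OF sub0 m0])
  have "AE x in BM. (m x)\<^sup>2 = 0"
    using integral_nonneg_eq_0_iff_AE[OF m2] i0 by simp
  then have AEm: "AE x in BM. m x = 0" by simp
  have AEi: "AE x in BM. m (shift i x) = 0" for i
  proof -
    have "AE x in distr BM BM (shift i). m x = 0" unfolding distr_shift by (rule AEm)
    then show ?thesis by (rule AE_distrD[OF shift_meas])
  qed
  have eq: "L2norm BM (Ssum (shift 1) (\<lambda>x. ff x - m x) n) = L2norm BM (Ssum (shift 1) ff n)" for n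
  proof -
    have "AE x in BM. \<forall>i\<in>{..<n}. m (shift (int i) x) = 0"
      by (rule AE_finite_allI) (auto intro: AEi)
    moreover have "AE x in BM. x \<in> space BM" by (rule AE_space)
    ultimately have A1: "AE x in BM. (Ssum (shift 1) (\<lambda>x. ff x - m x) n x)\<^sup>2 = (Ssum (shift 1) ff n x)\<^sup>2"
      by eventually_elim (simp add: Ssum_eq)
    have M1: "(\<lambda>x. (Ssum (shift 1) (\<lambda>x. ff x - m x) n x)\<^sup>2) \<in> borel_measurable BM"
      using Ssum_meas[of "\<lambda>x. ff x - m x" n] mM by measurable
    have M2: "(\<lambda>x. (Ssum (shift 1) ff n x)\<^sup>2) \<in> borel_measurable BM"
      using Ssum_meas[OF ff_meas, of n] by measurable
    have "(\<integral>x. (Ssum (shift 1) (\<lambda>x. ff x - m x) n x)\<^sup>2 \<partial>BM) = (\<integral>x. (Ssum (shift 1) ff n x)\<^sup>2 \<partial>BM)"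
      by (rule integral_cong_AE[OF M1 M2 A1])
    then show ?thesis unfolding L2norm_def by simp
  qed
  have "eventually (\<lambda>n. L2norm BM (Ssum (shift 1) ff n) / sqrt (real n) < 1/2) sequentially"
    using order_tendstoD(2)[OF lim, of "1/2"] by (simp add: eq)
  moreover have "eventually (\<lambda>n. n \<ge> 4) sequentially" by (rule eventually_ge_at_top)
  ultimately have "eventually (\<lambda>n::nat. False) sequentially"
    by eventually_elim (use lower in force)
  then show False by simp
qed

theorem proposition2:
  "\<exists>(M :: (int \<Rightarrow> real) measure) T f F.
     prob_space M \<and> invertible_mpt M T \<and> ergodic M T \<and>
     f \<in> L2 M M \<and>
     is_filtration M F \<and>
     (\<forall>j. sets (F j) = {Tpow (space M) T j -` A \<inter> space M | A. A \<in> sets (F 0)}) \<and>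
     \<not> regular M f (natural_filtration M T f) \<and>
     \<not> martingale_approx M T f (natural_filtration M T f) \<and>
     martingale_approx M T f F"
proof (intro exI conjI)
  show "prob_space BM" by (rule prob_BM)
  show "invertible_mpt BM (shift 1)" by (rule invertible)
  show "ergodic BM (shift 1)" by (rule ergodic_BM)
  show "ff \<in> L2 BM BM" unfolding L2_def
  proof (intro CollectI conjI ff_meas)
    show "integrable BM (\<lambda>x. (ff x)\<^sup>2)"
    proof (rule bounded_integrable[where C=4])
      show "(\<lambda>x. (ff x)\<^sup>2) \<in> borel_measurable BM" by measurable
      fix \<omega> assume w: "\<omega> \<in> space BM"
      have "\<bar>ff \<omega>\<bar>^2 \<le> 2^2" by (rule power_mono[OF ff_nz(2)[OF w]]) simp
      then show "\<bar>(ff \<omega>)\<^sup>2\<bar> \<le> 4" by simp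
    qed
  qed
  show "is_filtration BM FF" unfolding is_filtration_def
  proof (intro conjI allI impI)
    show "subalgebra BM (FF j)" for j unfolding subalgebra_def using CS_sub by (simp add: sets_FF space_FF)
    show "sets (FF i) \<subseteq> sets (FF j)" if "i \<le> j" for i j
      unfolding sets_FF by (rule CS_mono) (use that in auto)
  qed
  show "\<forall>j. sets (FF j) = {Tpow (space BM) (shift 1) j -` A \<inter> space BM | A. A \<in> sets (FF 0)}"
  proof
    fix j
    have "Tpow (space BM) (shift 1) j -` A \<inter> space BM = shift j -` A \<inter> space BM" for A
      by (auto simp: Tpow_shift)
    then have "{Tpow (space BM) (shift 1) j -` A \<inter> space BM | A. A \<in> sets (FF 0)} = {shift j -` A \<inter> space BM | A. A \<in> CS {..0}}"
      by (simp add: sets_FF)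
    also have "\<dots> = CS ((\<lambda>i. i + j) ` {..0})" by (rule CS_shift)
    also have "(\<lambda>i. i + j) ` {..0} = {..j}"
    proof (intro set_eqI iffI)
      fix x assume "x \<in> {..j}" then show "x \<in> (\<lambda>i. i + j) ` {..0}" by (intro image_eqI[of _ _ "x - j"]) auto
    qed auto
    finally show "sets (FF j) = {Tpow (space BM) (shift 1) j -` A \<inter> space BM | A. A \<in> sets (FF 0)}"
      by (simp add: sets_FF)
  qed
  show "\<not> regular BM ff (natural_filtration BM (shift 1) ff)" by (rule not_regular)
  show "\<not> martingale_approx BM (shift 1) ff (natural_filtration BM (shift 1) ff)" by (rule no_ma)
  show "martingale_approx BM (shift 1) ff FF" by (rule FF_approx)
qed


end
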